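(* Let $S:\mathcal{T}\to\mathcal{T}^{pl}$ be a section of the forget-planarity projection $\pi:\mathcal{T}^{pl}\to\mathcal{T}$, i.e. a linear map sending each non-planar rooted tree $t$ to a planar rooted tree $S(t)$ with $\pi(S(t))=t$. Let $\widetilde{\Psi}_S:=\pi\circ\Psi\circ S:\mathcal{T}\to\mathcal{T}$. Then for every non-planar rooted tree $t$, $$\widetilde{\Psi}_S(t)=\sum_{s\in T}\beta_S(s,t)\,s,$$ where the $\beta_S(s,t)$ are nonnegative integers (depending on $S$), given by $\beta_S(s,t)=\tilde b(s,S(t))/sym(s)$, where $sym(s)$ is the symmetry factor of $s$ and $\tilde b(s,\tau)$ is the number of bijections $\varphi:V(s)\to V(\tau)$ which are increasing from $(V(s),<)$ into $(V(\tau),\lll)$ and such that $\varphi^{-1}$ is increasing from $(V(\tau),<)$ into $(V(s),<)$.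
   Context: $\mathcal{T}^{pl}$ (resp. $\mathcal{T}$) is the vector space spanned by the set $T^{pl}$ of planar rooted trees (resp. the set $T$ of non-planar rooted trees); a rooted tree is a finite oriented tree with a root having no outgoing edge, every other vertex having exactly one outgoing edge, and it is planar if the branches at each vertex are ordered left to right. $\bullet$ is the one-vertex tree, $V(\sigma)$ the vertex set. For planar trees, $B_+(\tau_1\cdots\tau_k)$ joins the roots of the ordered trees $\tau_i$ to a new root; the left Butcher product is $\sigma\circ\!\!\searrow B_+(\tau_1\cdots\tau_k):=B_+(\sigma\tau_1\cdots\tau_k)$, and each planar tree with at least two vertices is uniquely $\sigma_1\circ\!\!\searrow\sigma_2$. The left grafting is $\sigma\searrow\tau=\sum_{v\in V(\tau)}\sigma\searrow_v\tau$, where $\sigma\searrow_v\tau$ grafts the root of $\sigma$ onto $v$ as the leftmost branch at $v$. $\Psi:\mathcal{T}^{pl}\to\mathcal{T}^{pl}$ is the linear map with $\Psi(\bullet)=\bullet$ and $\Psi(\sigma_1\circ\!\!\searrow\sigma_2)=\Psi(\sigma_1)\searrow\Psi(\sigma_2)$. Partial order $<$: $v<w$ if $v\ne w$ and the path from the root to $w$ passes through $v$. Total order $\lll$ on a planar tree $\tau=\tau_1\circ\!\!\searrow\tau_2$, recursively: $v\lll w$ iff ($v\lll w$ within $V(\tau_1)$ or within $V(\tau_2)$) or ($v\in V(\tau_2)$, $w\in V(\tau_1)$). Increasing means order-preserving. $sym(s)$ is the number of bijections $V(s)\to V(s)$ increasing for $<$ in both directions (tree automorphisms). *)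

theory Defs
  imports Complex_Main "HOL-Library.Multiset" "HOL-Library.FuncSet" "HOL-Library.Sublist"
begin

datatype ptree = PNode "ptree list"

datatype utree = UNode "utree multiset"

definition bullet :: ptree where "bullet = PNode []"

fun forget :: "ptree \<Rightarrow> utree" where
  "forget (PNode ts) = UNode (mset (map forget ts))"

text \<open>Vertices of a planar tree, encoded as paths of child indices from the root
  (the root is the empty path; child i of a vertex is obtained by appending i).\<close>
fun is_vertex :: "ptree \<Rightarrow> nat list \<Rightarrow> bool" where
  "is_vertex (PNode ts) [] = True"
| "is_vertex (PNode ts) (i # p) = (i < length ts \<and> is_vertex (ts ! i) p)"

definition vset :: "ptree \<Rightarrow> nat list set" where
  "vset t = {v. is_vertex t v}"

text \<open>The partial order: v < w iff v \<noteq> w and the path from the root to w passes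
  through v, i.e. v is a strict prefix of w.\<close>
abbreviation below :: "nat list \<Rightarrow> nat list \<Rightarrow> bool" where
  "below v w \<equiv> strict_prefix v w"

fun graft_at :: "ptree \<Rightarrow> nat list \<Rightarrow> ptree \<Rightarrow> ptree" where
  "graft_at \<sigma> [] (PNode ts) = PNode (\<sigma> # ts)"
| "graft_at \<sigma> (i # p) (PNode ts) = PNode (ts[i := graft_at \<sigma> p (ts ! i)])"

text \<open>Elements of the vector space with nonnegative integer coefficients are
  represented as multisets of trees. Left grafting sigma \<searrow> tau, and its bilinear extension.\<close>
definition graft :: "ptree \<Rightarrow> ptree \<Rightarrow> ptree multiset" where
  "graft \<sigma> \<tau> = image_mset (\<lambda>v. graft_at \<sigma> v \<tau>) (mset_set (vset \<tau>))"

definition graft_ms :: "ptree multiset \<Rightarrow> ptree multiset \<Rightarrow> ptree multiset" where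
  "graft_ms A B = \<Sum>\<^sub># (image_mset (\<lambda>a. \<Sum>\<^sub># (image_mset (\<lambda>b. graft a b) B)) A)"

text \<open>Psi(bullet) = bullet, Psi(sigma1 o\<searrow> sigma2) = Psi(sigma1) \<searrow> Psi(sigma2), where
  sigma1 o\<searrow> PNode ts = PNode (sigma1 # ts).\<close>
fun Psi :: "ptree \<Rightarrow> ptree multiset" where
  "Psi (PNode []) = {# PNode [] #}"
| "Psi (PNode (t1 # ts)) = graft_ms (Psi t1) (Psi (PNode ts))"

text \<open>Total order lll on the vertices of a planar tree tau = tau1 o\<searrow> tau2:
  vertices of tau1 are the paths 0 # p, vertices of tau2 are [] and Suc i # p
  (corresponding to i # p in tau2).\<close>
fun dec_path :: "nat list \<Rightarrow> nat list" where
  "dec_path [] = []"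
| "dec_path (i # p) = (i - 1) # p"

fun lll :: "ptree \<Rightarrow> nat list \<Rightarrow> nat list \<Rightarrow> bool" where
  "lll (PNode []) v w = False"
| "lll (PNode (t1 # ts)) v w =
     (case (v, w) of
        (0 # p, 0 # q) \<Rightarrow> lll t1 p q
      | (0 # p, _) \<Rightarrow> False
      | (_, 0 # q) \<Rightarrow> True
      | _ \<Rightarrow> lll (PNode ts) (dec_path v) (dec_path w))"

definition symf :: "ptree \<Rightarrow> nat" where
  "symf s = card {\<phi> \<in> vset s \<rightarrow>\<^sub>E vset s. bij_betw \<phi> (vset s) (vset s)
      \<and> (\<forall>v\<in>vset s. \<forall>w\<in>vset s. below v w \<longrightarrow> below (\<phi> v) (\<phi> w))
      \<and> (\<forall>x\<in>vset s. \<forall>y\<in>vset s. below x y \<longrightarrow>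
            below (inv_into (vset s) \<phi> x) (inv_into (vset s) \<phi> y))}"

definition btilde :: "ptree \<Rightarrow> ptree \<Rightarrow> nat" where
  "btilde s \<tau> = card {\<phi> \<in> vset s \<rightarrow>\<^sub>E vset \<tau>. bij_betw \<phi> (vset s) (vset \<tau>)
      \<and> (\<forall>v\<in>vset s. \<forall>w\<in>vset s. below v w \<longrightarrow> lll \<tau> (\<phi> v) (\<phi> w))
      \<and> (\<forall>x\<in>vset \<tau>. \<forall>y\<in>vset \<tau>. below x y \<longrightarrow>
            below (inv_into (vset s) \<phi> x) (inv_into (vset s) \<phi> y))}"

end

theory Submission
  imports Defs "HOL-Combinatorics.List_Permutation"
begin


lemma is_vertex_node: "is_vertex (PNode ts) x \<longleftrightarrow> x = [] \<or> (\<exists>i p. x = i#p \<and> i < length ts \<and> is_vertex (ts!i) p)"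
  by (cases x) auto

lemma vset_node: "vset (PNode ts) = insert [] (\<Union>i<length ts. (Cons i) ` vset (ts!i))"
  unfolding vset_def using is_vertex_node by auto

lemma vset_finite: "finite (vset t)"
proof (induction t)
  case (PNode ts)
  then show ?case by (simp add: vset_node)
qed

lemma nil_in_vset[simp]: "[] \<in> vset t"
  by (cases t) (simp add: vset_def)

lemma Cons_in_vset[simp]: "(i#p) \<in> vset (PNode ts) \<longleftrightarrow> i < length ts \<and> p \<in> vset (ts!i)"
  by (simp add: vset_def)

lemma mset_eq_by_bij:
  assumes "bij_betw \<pi> {..<length xs} {..<length ys}" "\<forall>i<length xs. xs!i = ys!(\<pi> i)"
  shows "mset xs = mset ys"
proof -
  have "mset xs = mset (map (nth xs) [0..<length xs])" by (simp add: map_nth)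
  also have "\<dots> = image_mset (nth xs) (mset_set {..<length xs})"
    by (simp add: lessThan_atLeast0)
  also have "\<dots> = image_mset (nth ys \<circ> \<pi>) (mset_set {..<length xs})"
    using assms(2) by (intro image_mset_cong) auto
  also have "\<dots> = image_mset (nth ys) (image_mset \<pi> (mset_set {..<length xs}))"
    by (simp add: image_mset.compositionality)
  also have "image_mset \<pi> (mset_set {..<length xs}) = mset_set {..<length ys}"
    using assms(1) by (simp add: image_mset_mset_set bij_betw_def)
  also have "image_mset (nth ys) (mset_set {..<length ys}) = mset (map (nth ys) [0..<length ys])"
    by (simp add: lessThan_atLeast0)
  also have "\<dots> = mset ys" by (simp add: map_nth)
  finally show ?thesis .
qed

definition tiso :: "ptree \<Rightarrow> ptree \<Rightarrow> (nat list \<Rightarrow> nat list) \<Rightarrow> bool" where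
  "tiso s \<sigma> f \<longleftrightarrow> bij_betw f (vset s) (vset \<sigma>) \<and>
     (\<forall>x\<in>vset s. \<forall>y\<in>vset s. strict_prefix x y \<longleftrightarrow> strict_prefix (f x) (f y))"

lemma forget_imp_tiso: "forget s = forget \<sigma> \<Longrightarrow> \<exists>f. tiso s \<sigma> f"
proof (induction s arbitrary: \<sigma>)
  case (PNode ts)
  obtain us where \<sigma>: "\<sigma> = PNode us" by (cases \<sigma>)
  have "mset (map forget ts) = mset (map forget us)" using PNode.prems \<sigma> by simp
  from permutation_Ex_bij[OF this] obtain \<pi> where
    \<pi>: "bij_betw \<pi> {..<length ts} {..<length us}"
    and h: "\<forall>i<length ts. map forget ts ! i = map forget us ! \<pi> i" by auto
  have \<pi>e: "\<forall>i<length ts. forget (ts ! i) = forget (us ! \<pi> i)"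
  proof (intro allI impI)
    fix i assume i: "i < length ts"
    then have "\<pi> i < length us" using \<pi> by (auto simp: bij_betw_def)
    then show "forget (ts ! i) = forget (us ! \<pi> i)" using h i by simp
  qed
  have "\<forall>i. \<exists>g. i < length ts \<longrightarrow> tiso (ts!i) (us!(\<pi> i)) g"
    using PNode.IH \<pi>e by (metis nth_mem)
  then obtain G where G: "\<And>i. i < length ts \<Longrightarrow> tiso (ts!i) (us!(\<pi> i)) (G i)" by metis
  define f where "f x = (case x of [] \<Rightarrow> [] | i#p \<Rightarrow> \<pi> i # G i p)" for x
  have f0: "f [] = []" and fc: "f (i#p) = \<pi> i # G i p" for i p by (simp_all add: f_def)
  have pin: "\<pi> i < length us" if "i < length ts" for i using \<pi> that by (auto simp: bij_betw_def)
  have piinj: "\<pi> i = \<pi> j \<longleftrightarrow> i = j" if "i < length ts" "j < length ts" for i j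
    using \<pi> that by (auto simp: bij_betw_def inj_on_def)
  have Gb: "bij_betw (G i) (vset (ts!i)) (vset (us!(\<pi> i)))" if "i < length ts" for i
    using G[OF that] by (simp add: tiso_def)
  have Go: "strict_prefix p q \<longleftrightarrow> strict_prefix (G i p) (G i q)"
    if "i < length ts" "p \<in> vset (ts!i)" "q \<in> vset (ts!i)" for i p q
    using G[OF that(1)] that by (simp add: tiso_def)
  have inj: "inj_on f (vset (PNode ts))"
  proof (rule inj_onI)
    fix x y assume x: "x \<in> vset (PNode ts)" and y: "y \<in> vset (PNode ts)" and e: "f x = f y"
    show "x = y"
    proof (cases x)
      case Nil then show ?thesis using e y by (cases y) (auto simp: f0 fc)
    next
      case (Cons i p)
      then obtain j q where yq: "y = j#q" using e by (cases y) (auto simp: f0 fc)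
      have ij: "i = j" using e x y Cons yq piinj by (auto simp: fc)
      then have "G i p = G i q" using e Cons yq by (simp add: fc)
      then have "p = q" using Gb[of i] x y Cons yq ij by (auto simp: bij_betw_def inj_on_def)
      then show ?thesis using Cons yq ij by simp
    qed
  qed
  have img: "f ` vset (PNode ts) = vset (PNode us)"
  proof
    show "f ` vset (PNode ts) \<subseteq> vset (PNode us)"
    proof
      fix y assume "y \<in> f ` vset (PNode ts)"
      then obtain x where x: "x \<in> vset (PNode ts)" "y = f x" by auto
      show "y \<in> vset (PNode us)"
      proof (cases x)
        case Nil then show ?thesis using x by (simp add: f0)
      next
        case (Cons i p)
        then show ?thesis using x pin Gb[of i] by (auto simp: fc bij_betw_def)
      qed
    qed
  next
    show "vset (PNode us) \<subseteq> f ` vset (PNode ts)"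
    proof
      fix y assume y: "y \<in> vset (PNode us)"
      show "y \<in> f ` vset (PNode ts)"
      proof (cases y)
        case Nil then show ?thesis using f0 nil_in_vset by (metis image_eqI)
      next
        case (Cons j q)
        then have j: "j < length us" "q \<in> vset (us!j)" using y by auto
        then obtain i where i: "i < length ts" "\<pi> i = j" using \<pi>
          by (metis bij_betw_def imageE lessThan_iff)
        then obtain p where p: "p \<in> vset (ts!i)" "G i p = q" using Gb[of i] j
          by (metis bij_betw_def imageE)
        have "f (i#p) = y" using Cons i p by (simp add: fc)
        moreover have "i#p \<in> vset (PNode ts)" using i p by simp
        ultimately show ?thesis by (metis image_eqI)
      qed
    qed
  qed
  have ord: "strict_prefix x y \<longleftrightarrow> strict_prefix (f x) (f y)"
    if x: "x \<in> vset (PNode ts)" and y: "y \<in> vset (PNode ts)" for x y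
  proof (cases x)
    case Nil then show ?thesis by (cases y) (auto simp: f0 fc)
  next
    case (Cons i p)
    show ?thesis
    proof (cases y)
      case Nil then show ?thesis using Cons by (simp add: f0 fc)
    next
      case C2: (Cons j q)
      show ?thesis
      proof (cases "i = j")
        case True then show ?thesis using Cons C2 x y Go[of i p q] by (simp add: fc)
      next
        case False then show ?thesis using Cons C2 x y piinj by (simp add: fc)
      qed
    qed
  qed
  have "tiso (PNode ts) \<sigma> f" unfolding tiso_def \<sigma> using inj img ord by (simp add: bij_betw_def)
  then show ?case by blast
qed

lemma tiso_imp_forget: "tiso s \<sigma> f \<Longrightarrow> forget s = forget \<sigma>"
proof (induction s arbitrary: \<sigma> f)
  case (PNode ts)
  obtain us where \<sigma>: "\<sigma> = PNode us" by (cases \<sigma>)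
  have bij: "bij_betw f (vset (PNode ts)) (vset (PNode us))" using PNode.prems \<sigma> by (simp add: tiso_def)
  have ord: "\<And>x y. x \<in> vset (PNode ts) \<Longrightarrow> y \<in> vset (PNode ts) \<Longrightarrow>
     strict_prefix x y \<longleftrightarrow> strict_prefix (f x) (f y)" using PNode.prems \<sigma> by (simp add: tiso_def)
  have inj: "\<And>x y. x \<in> vset (PNode ts) \<Longrightarrow> y \<in> vset (PNode ts) \<Longrightarrow> f x = f y \<longleftrightarrow> x = y"
    using bij by (auto simp: bij_betw_def inj_on_def)
  have into: "\<And>x. x \<in> vset (PNode ts) \<Longrightarrow> f x \<in> vset (PNode us)" using bij by (auto simp: bij_betw_def)
  have onto: "\<And>y. y \<in> vset (PNode us) \<Longrightarrow> \<exists>x\<in>vset (PNode ts). f x = y" using bij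
    by (metis bij_betw_def imageE)
  have f0: "f [] = []"
  proof (rule ccontr)
    assume ne: "f [] \<noteq> []"
    obtain x where x: "x \<in> vset (PNode ts)" "f x = []" using onto[of "[]"] by auto
    have "x \<noteq> []" using x ne by auto
    then have "strict_prefix [] x" by (cases x) auto
    then have "strict_prefix (f []) (f x)" using ord[of "[]" x] x by simp
    then show False using x by simp
  qed
  have child: "\<exists>j. f [i] = [j] \<and> j < length us" if i: "i < length ts" for i
  proof -
    have iv: "[i] \<in> vset (PNode ts)" using i by simp
    have "f [i] \<noteq> []" using inj[of "[i]" "[]"] iv f0 by auto
    then obtain j q where jq: "f [i] = j#q" by (cases "f [i]") auto
    have jv: "j < length us" using into[OF iv] jq by simp
    have "q = []"
    proof (rule ccontr)
      assume "q \<noteq> []"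
      then have sp: "strict_prefix [j] (j#q)" by (cases q) auto
      have "[j] \<in> vset (PNode us)" using jv by simp
      then obtain z where z: "z \<in> vset (PNode ts)" "f z = [j]" using onto by blast
      have "strict_prefix z [i]" using ord[OF z(1) iv] z jq sp by simp
      then have "z = []" by (cases z) auto
      then show False using z f0 by simp
    qed
    then show ?thesis using jq jv by simp
  qed
  define \<pi> where "\<pi> i = hd (f [i])" for i
  have fpi: "f [i] = [\<pi> i]" "\<pi> i < length us" if "i < length ts" for i
    using child[OF that] by (auto simp: \<pi>_def)
  have fcons: "f (i#p) = \<pi> i # tl (f (i#p))" if "i < length ts" "p \<in> vset (ts!i)" for i p
  proof (cases p)
    case Nil then show ?thesis using fpi that by simp
  next
    case (Cons a b)
    have "strict_prefix [i] (i#p)" using Cons by simp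
    then have "strict_prefix [\<pi> i] (f (i#p))" using ord[of "[i]" "i#p"] that fpi by simp
    then show ?thesis by (cases "f (i#p)") auto
  qed
  have piinj: "\<pi> i = \<pi> k \<Longrightarrow> i = k" if "i < length ts" "k < length ts" for i k
    using inj[of "[i]" "[k]"] fpi that by auto
  have pibij: "bij_betw \<pi> {..<length ts} {..<length us}"
  proof (rule bij_betw_imageI)
    show "inj_on \<pi> {..<length ts}" using piinj by (auto intro: inj_onI)
    show "\<pi> ` {..<length ts} = {..<length us}"
    proof
      show "\<pi> ` {..<length ts} \<subseteq> {..<length us}" using fpi by auto
      show "{..<length us} \<subseteq> \<pi> ` {..<length ts}"
      proof
        fix j assume "j \<in> {..<length us}"
        then have "[j] \<in> vset (PNode us)" by simp
        then obtain x where x: "x \<in> vset (PNode ts)" "f x = [j]" using onto by blast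
        then obtain k r where kr: "x = k#r" using f0 by (cases x) auto
        have k: "k < length ts" "r \<in> vset (ts!k)" using x kr by auto
        have "r = []"
        proof (rule ccontr)
          assume "r \<noteq> []"
          then have "strict_prefix [k] x" using kr by (cases r) auto
          then have "strict_prefix (f [k]) [j]" using ord[of "[k]" x] x k by simp
          then show False using fpi[OF k(1)] by simp
        qed
        then have "\<pi> k = j" using x kr fpi[OF k(1)] by simp
        then show "j \<in> \<pi> ` {..<length ts}" using k by auto
      qed
    qed
  qed
  have sub: "forget (ts!i) = forget (us!(\<pi> i))" if i: "i < length ts" for i
  proof -
    define g where "g p = tl (f (i#p))" for p
    have fg: "f (i#p) = \<pi> i # g p" if "p \<in> vset (ts!i)" for p using fcons[OF i that] by (simp add: g_def)
    have gt: "tiso (ts!i) (us!(\<pi> i)) g"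
      unfolding tiso_def
    proof (intro conjI ballI)
      show "bij_betw g (vset (ts ! i)) (vset (us ! \<pi> i))"
      proof (rule bij_betw_imageI)
        show "inj_on g (vset (ts ! i))"
        proof (rule inj_onI)
          fix p q assume "p \<in> vset (ts!i)" "q \<in> vset (ts!i)" "g p = g q"
          then show "p = q" using fg inj[of "i#p" "i#q"] i by auto
        qed
        show "g ` vset (ts ! i) = vset (us ! \<pi> i)"
        proof
          show "g ` vset (ts ! i) \<subseteq> vset (us ! \<pi> i)"
          proof
            fix y assume "y \<in> g ` vset (ts ! i)"
            then obtain p where p: "p \<in> vset (ts!i)" "y = g p" by auto
            have "i#p \<in> vset (PNode ts)" using p i by simp
            then have "\<pi> i # g p \<in> vset (PNode us)" using into fg[OF p(1)] by metis
            then show "y \<in> vset (us ! \<pi> i)" using p by simp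
          qed
          show "vset (us ! \<pi> i) \<subseteq> g ` vset (ts ! i)"
          proof
            fix q assume q: "q \<in> vset (us ! \<pi> i)"
            then have "\<pi> i # q \<in> vset (PNode us)" using fpi[OF i] by simp
            then obtain x where x: "x \<in> vset (PNode ts)" "f x = \<pi> i # q" using onto by blast
            then obtain k r where kr: "x = k#r" using f0 by (cases x) auto
            have k: "k < length ts" "r \<in> vset (ts!k)" using x kr by auto
            have "\<pi> k = \<pi> i" using fcons[OF k] x kr by simp
            then have "k = i" using piinj k i by blast
            then have "g r = q" using fg k x kr by simp
            then show "q \<in> g ` vset (ts ! i)" using k \<open>k = i\<close> by auto
          qed
        qed
      qed
      fix p q assume "p \<in> vset (ts!i)" "q \<in> vset (ts!i)"
      then show "strict_prefix p q \<longleftrightarrow> strict_prefix (g p) (g q)"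
        using ord[of "i#p" "i#q"] fg i by simp
    qed
    show ?thesis using PNode.IH[OF _ gt] i by simp
  qed
  have "mset (map forget ts) = mset (map forget us)"
  proof (rule mset_eq_by_bij)
    show "bij_betw \<pi> {..<length (map forget ts)} {..<length (map forget us)}" using pibij by simp
    show "\<forall>i<length (map forget ts). map forget ts ! i = map forget us ! \<pi> i"
      using sub fpi by simp
  qed
  then show ?case using \<sigma> by simp
qed

lemma forget_eq_iff_tiso: "forget s = forget \<sigma> \<longleftrightarrow> (\<exists>f. tiso s \<sigma> f)"
  using forget_imp_tiso tiso_imp_forget by blast



fun inc_path :: "nat list \<Rightarrow> nat list" where
  "inc_path [] = []"
| "inc_path (i # p) = Suc i # p"

fun shift :: "nat list \<Rightarrow> nat list \<Rightarrow> nat list" where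
  "shift [] w = inc_path w"
| "shift (j#v) [] = []"
| "shift (j#v) (i#r) = (if i = j then i # shift v r else i # r)"

lemma inc_nil_iff[simp]: "inc_path w = [] \<longleftrightarrow> w = []" by (cases w) auto
lemma inc_inj[simp]: "inc_path w = inc_path w' \<longleftrightarrow> w = w'"
  by (cases w; cases w') auto
lemma inc_ne0[simp]: "inc_path q \<noteq> 0 # p" by (cases q) auto
lemma inc_ne0'[simp]: "0 # p \<noteq> inc_path q" by (cases q) auto
lemma inc_Suc[simp]: "Suc k # p = inc_path q \<longleftrightarrow> q = k # p" by (cases q) auto
lemma inc_Suc'[simp]: "inc_path q = Suc k # p \<longleftrightarrow> q = k # p" by (cases q) auto
lemma dec_inc[simp]: "dec_path (inc_path q) = q" by (cases q) auto
lemma inc_sp[simp]: "strict_prefix (inc_path x) (inc_path y) \<longleftrightarrow> strict_prefix x y"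
  by (cases x; cases y) auto
lemma inc_sp0[simp]: "strict_prefix (inc_path q) (0#p) \<longleftrightarrow> q = []"
  by (cases q) auto
lemma inc_sp0'[simp]: "\<not> strict_prefix (0#p) (inc_path q)"
  by (cases q) auto

lemma shift_nil_iff[simp]: "shift v w = [] \<longleftrightarrow> w = []"
  by (cases v; cases w) auto

lemma shift_inj[simp]: "shift v w = shift v w' \<longleftrightarrow> w = w'"
proof (induction v arbitrary: w w')
  case Nil then show ?case by simp
next
  case (Cons j v)
  then show ?case by (cases w; cases w') auto
qed

lemma shift_ne[simp]: "shift v w \<noteq> v @ 0 # p"
proof (induction v arbitrary: w)
  case Nil then show ?case by simp
next
  case (Cons j v) then show ?case by (cases w) auto
qed

lemma shift_sp[simp]: "strict_prefix (shift v w) (shift v w') \<longleftrightarrow> strict_prefix w w'"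
proof (induction v arbitrary: w w')
  case Nil then show ?case by simp
next
  case (Cons j v)
  then show ?case by (cases w; cases w') auto
qed

lemma shift_sp2[simp]: "strict_prefix (shift v w) (v @ 0 # p) \<longleftrightarrow> prefix w v"
proof (induction v arbitrary: w)
  case Nil then show ?case by (cases w) auto
next
  case (Cons j v)
  then show ?case by (cases w) auto
qed

lemma shift_sp3[simp]: "\<not> strict_prefix (v @ 0 # p) (shift v w)"
proof (induction v arbitrary: w)
  case Nil then show ?case by (cases w) auto
next
  case (Cons j v)
  then show ?case by (cases w) auto
qed

lemma vset_cons: "vset (PNode (t1 # ts)) = Cons 0 ` vset t1 \<union> inc_path ` vset (PNode ts)"
proof -
  have "x \<in> vset (PNode (t1 # ts)) \<longleftrightarrow> x \<in> Cons 0 ` vset t1 \<union> inc_path ` vset (PNode ts)" for x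
  proof (cases x)
    case Nil then show ?thesis by (auto intro: image_eqI[of _ _ "[]"])
  next
    case (Cons i p)
    then show ?thesis
    proof (cases i)
      case 0 then show ?thesis using Cons by (auto simp: image_iff elim: inc_path.elims)
    next
      case (Suc k) then show ?thesis using Cons
        by (auto simp: image_iff intro!: bexI[of _ "k#p"] elim: inc_path.elims)
    qed
  qed
  then show ?thesis by blast
qed

lemma vset_graft: "v \<in> vset b \<Longrightarrow>
   vset (graft_at a v b) = (\<lambda>p. v @ 0 # p) ` vset a \<union> shift v ` vset b"
proof (induction v arbitrary: b)
  case Nil
  obtain ts where b: "b = PNode ts" by (cases b)
  show ?case using vset_cons[of a ts] b by (simp add: image_image)
next
  case (Cons j v)
  obtain ts where b: "b = PNode ts" by (cases b)
  have j: "j < length ts" and v: "v \<in> vset (ts!j)" using Cons.prems b by auto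
  have IH: "vset (graft_at a v (ts!j)) = (\<lambda>p. v @ 0 # p) ` vset a \<union> shift v ` vset (ts!j)"
    using Cons.IH[OF v] .
  have "x \<in> vset (graft_at a (j#v) b) \<longleftrightarrow> x \<in> (\<lambda>p. (j#v) @ 0 # p) ` vset a \<union> shift (j#v) ` vset b" for x
  proof (cases x)
    case Nil then show ?thesis using b by (auto intro: image_eqI[of _ _ "[]"])
  next
    case (Cons i r)
    show ?thesis
    proof (cases "i = j")
      case True
      have "x \<in> vset (graft_at a (j#v) b) \<longleftrightarrow> r \<in> vset (graft_at a v (ts!j))"
        using Cons True b j by simp
      also have "\<dots> \<longleftrightarrow> x \<in> (\<lambda>p. (j#v) @ 0 # p) ` vset a \<union> shift (j#v) ` vset b"
        using IH Cons True b j
        apply (simp add: image_iff)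
        apply (rule iffI)
         apply (auto intro: bexI[of _ "j # _"])[1]
        apply (erule disjE)
         apply blast
        apply (erule bexE)
        subgoal for y by (cases y) (auto split: if_splits)
        done
      finally show ?thesis .
    next
      case False
      have "x \<in> vset (graft_at a (j#v) b) \<longleftrightarrow> i < length ts \<and> r \<in> vset (ts!i)"
        using Cons False b j by simp
      also have "\<dots> \<longleftrightarrow> x \<in> (\<lambda>p. (j#v) @ 0 # p) ` vset a \<union> shift (j#v) ` vset b"
        using Cons False b
        apply (simp add: image_iff)
        apply (rule iffI)
         apply (auto intro: bexI[of _ "i # r"])[1]
        apply (erule bexE)
        subgoal for y by (cases y) (auto split: if_splits)
        done
      finally show ?thesis .
    qed
  qed
  then show ?case by blast
qed



lemma lll_00[simp]: "lll (PNode (t1#ts)) (0#p) (0#q) = lll t1 p q" by simp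
lemma lll_0i[simp]: "\<not> lll (PNode (t1#ts)) (0#p) (inc_path q)" by (cases q) auto
lemma lll_i0[simp]: "lll (PNode (t1#ts)) (inc_path q) (0#p)" by (cases q) auto
lemma lll_ii[simp]: "lll (PNode (t1#ts)) (inc_path q) (inc_path q') = lll (PNode ts) q q'"
  by (cases q; cases q') (auto split: nat.splits)
declare lll.simps(2)[simp del]

definition Adm :: "ptree \<Rightarrow> (nat list \<times> nat list) set set" where
  "Adm \<tau> = {R. R \<subseteq> vset \<tau> \<times> vset \<tau>
      \<and> (\<forall>x\<in>vset \<tau>. \<forall>y\<in>vset \<tau>. strict_prefix x y \<longrightarrow> (x,y)\<in>R)
      \<and> (\<forall>(x,y)\<in>R. lll \<tau> x y) \<and> trans R \<and> (\<forall>x. (x,x)\<notin>R)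
      \<and> (\<forall>x y z. (x,z)\<in>R \<longrightarrow> (y,z)\<in>R \<longrightarrow> x = y \<or> (x,y)\<in>R \<or> (y,x)\<in>R)}"

definition combine :: "ptree \<Rightarrow> (nat list \<times> nat list) set \<Rightarrow> (nat list \<times> nat list) set \<Rightarrow> nat list
   \<Rightarrow> (nat list \<times> nat list) set" where
  "combine t1 R1 R2 p0 = {(0#x, 0#y) | x y. (x,y)\<in>R1} \<union> {(inc_path x, inc_path y) | x y. (x,y)\<in>R2}
     \<union> {(inc_path x, 0#y) | x y. y \<in> vset t1 \<and> (x = p0 \<or> (x,p0)\<in>R2)}"

lemma comb_00[simp]: "(0#x, 0#y) \<in> combine t1 R1 R2 p0 \<longleftrightarrow> (x,y)\<in>R1"
  by (auto simp: combine_def)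
lemma comb_ii[simp]: "(inc_path x, inc_path y) \<in> combine t1 R1 R2 p0 \<longleftrightarrow> (x,y)\<in>R2"
  by (auto simp: combine_def)
lemma comb_i0[simp]: "(inc_path x, 0#y) \<in> combine t1 R1 R2 p0 \<longleftrightarrow> y \<in> vset t1 \<and> (x = p0 \<or> (x,p0)\<in>R2)"
  by (auto simp: combine_def)
lemma comb_0i[simp]: "(0#x, inc_path y) \<notin> combine t1 R1 R2 p0"
  by (auto simp: combine_def)

lemma comb_cases:
  assumes "(u,w) \<in> combine t1 R1 R2 p0"
  obtains x y where "u = 0#x" "w = 0#y" "(x,y) \<in> R1"
  | x y where "u = inc_path x" "w = inc_path y" "(x,y) \<in> R2"
  | x y where "u = inc_path x" "w = 0#y" "y \<in> vset t1" "x = p0 \<or> (x,p0)\<in>R2"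
  using assms unfolding combine_def by blast

lemma combine_Adm:
  assumes R1: "R1 \<in> Adm t1" and R2: "R2 \<in> Adm (PNode ts)" and p0: "p0 \<in> vset (PNode ts)"
  shows "combine t1 R1 R2 p0 \<in> Adm (PNode (t1#ts))"
proof -
  let ?C = "combine t1 R1 R2 p0"
  let ?V2 = "vset (PNode ts)"
  note A1 = R1[unfolded Adm_def, simplified]
  note A2 = R2[unfolded Adm_def, simplified]
  have sub1: "R1 \<subseteq> vset t1 \<times> vset t1" using A1 by blast
  have sub2: "R2 \<subseteq> ?V2 \<times> ?V2" using A2 by blast
  have tr1: "trans R1" and tr2: "trans R2" using A1 A2 by blast+
  have ir1: "(x,x) \<notin> R1" and ir2: "(x,x) \<notin> R2" for x using A1 A2 by blast+
  have ch1: "(x,z)\<in>R1 \<Longrightarrow> (y,z)\<in>R1 \<Longrightarrow> x = y \<or> (x,y)\<in>R1 \<or> (y,x)\<in>R1" for x y z using A1 by blast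
  have ch2: "(x,z)\<in>R2 \<Longrightarrow> (y,z)\<in>R2 \<Longrightarrow> x = y \<or> (x,y)\<in>R2 \<or> (y,x)\<in>R2" for x y z using A2 by blast
  have pf1: "x\<in>vset t1 \<Longrightarrow> y\<in>vset t1 \<Longrightarrow> strict_prefix x y \<Longrightarrow> (x,y)\<in>R1" for x y using A1 by blast
  have pf2: "x\<in>?V2 \<Longrightarrow> y\<in>?V2 \<Longrightarrow> strict_prefix x y \<Longrightarrow> (x,y)\<in>R2" for x y using A2 by blast
  have ll1: "(x,y)\<in>R1 \<Longrightarrow> lll t1 x y" for x y using A1 by blast
  have ll2: "(x,y)\<in>R2 \<Longrightarrow> lll (PNode ts) x y" for x y using A2 by blast
  have "?C \<subseteq> vset (PNode (t1#ts)) \<times> vset (PNode (t1#ts))"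
  proof
    fix z assume "z \<in> ?C"
    then obtain u w where z: "z = (u,w)" "(u,w) \<in> ?C" by (cases z) auto
    from z(2) show "z \<in> vset (PNode (t1#ts)) \<times> vset (PNode (t1#ts))"
      by (cases rule: comb_cases) (use z sub1 sub2 p0 in \<open>auto simp: vset_cons\<close>)
  qed
  moreover have "\<forall>x\<in>vset (PNode (t1#ts)). \<forall>y\<in>vset (PNode (t1#ts)). strict_prefix x y \<longrightarrow> (x,y)\<in>?C"
  proof (intro ballI impI)
    fix x y assume x: "x \<in> vset (PNode (t1#ts))" and y: "y \<in> vset (PNode (t1#ts))" and sp: "strict_prefix x y"
    from x y show "(x,y) \<in> ?C" unfolding vset_cons
    proof (elim UnE imageE)
      fix a b assume "x = 0#a" "a \<in> vset t1" "y = 0#b" "b \<in> vset t1"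
      then show ?thesis using sp pf1 by simp
    next
      fix a b assume "x = 0#a" "a \<in> vset t1" "y = inc_path b" "b \<in> ?V2"
      then show ?thesis using sp by simp
    next
      fix a b assume xa: "x = inc_path a" "a \<in> ?V2" and yb: "y = 0#b" "b \<in> vset t1"
      have a0: "a = []" using sp xa yb by simp
      have "[] = p0 \<or> ([],p0) \<in> R2" using pf2[of "[]" p0] p0
        by (cases p0) auto
      then have "(inc_path a, 0#b) \<in> ?C" unfolding comb_i0 using a0 yb by auto
      then show ?thesis using xa yb by (simp only:)
    next
      fix a b assume "x = inc_path a" "a \<in> ?V2" "y = inc_path b" "b \<in> ?V2"
      then show ?thesis using sp pf2 by simp
    qed
  qed
  moreover have "\<forall>(x,y)\<in>?C. lll (PNode (t1#ts)) x y"
  proof (intro ballI, clarify)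
    fix u w assume "(u,w) \<in> ?C"
    then show "lll (PNode (t1#ts)) u w"
      by (cases rule: comb_cases) (auto dest: ll1 ll2)
  qed
  moreover have "trans ?C"
  proof (rule transI)
    fix u w z assume uw: "(u,w) \<in> ?C" and wz: "(w,z) \<in> ?C"
    from uw show "(u,z) \<in> ?C"
    proof (cases rule: comb_cases)
      case (1 x y)
      from wz show ?thesis
        by (cases rule: comb_cases) (use 1 tr1 in \<open>auto dest: transD\<close>)
    next
      case (2 x y)
      from wz show ?thesis
        by (cases rule: comb_cases) (use 2 tr2 in \<open>auto dest: transD\<close>)
    next
      case (3 x y)
      from wz show ?thesis
        by (cases rule: comb_cases) (use 3 tr1 sub1 in \<open>auto dest: transD\<close>)
    qed
  qed
  moreover have "\<forall>x. (x,x) \<notin> ?C"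
  proof (intro allI notI)
    fix x assume "(x,x) \<in> ?C"
    then show False by (cases rule: comb_cases) (auto simp: ir1 ir2)
  qed
  moreover have "\<forall>x y z. (x,z)\<in>?C \<longrightarrow> (y,z)\<in>?C \<longrightarrow> x = y \<or> (x,y)\<in>?C \<or> (y,x)\<in>?C"
  proof (intro allI impI)
    fix u v w assume uw: "(u,w) \<in> ?C" and vw: "(v,w) \<in> ?C"
    from uw show "u = v \<or> (u,v)\<in>?C \<or> (v,u)\<in>?C"
    proof (cases rule: comb_cases)
      case (1 x y)
      from vw show ?thesis
        by (cases rule: comb_cases) (use 1 ch1 sub1 in auto)
    next
      case (2 x y)
      from vw show ?thesis
        by (cases rule: comb_cases) (use 2 ch2 in auto)
    next
      case (3 x y)
      from vw show ?thesis
        by (cases rule: comb_cases) (use 3 ch2 sub1 in \<open>auto dest: transD\<close>)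
    qed
  qed
  ultimately show ?thesis unfolding Adm_def by blast
qed

lemma inc_in_vset[simp]: "inc_path x \<in> vset (PNode (t1#ts)) \<longleftrightarrow> x \<in> vset (PNode ts)"
  by (cases x) auto

lemma combine_inj:
  assumes "R1 \<in> Adm t1" "R2 \<in> Adm (PNode ts)" "R1' \<in> Adm t1" "R2' \<in> Adm (PNode ts)"
    "p \<in> vset (PNode ts)" "p' \<in> vset (PNode ts)"
    and eq: "combine t1 R1 R2 p = combine t1 R1' R2' p'"
  shows "R1 = R1' \<and> R2 = R2' \<and> p = p'"
proof (intro conjI)
  show "R1 = R1'"
  proof (intro set_eqI, clarify)
    fix x y show "(x,y) \<in> R1 \<longleftrightarrow> (x,y) \<in> R1'"
      using comb_00[of x y t1 R1 R2 p] comb_00[of x y t1 R1' R2' p'] eq by simp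
  qed
  show R2: "R2 = R2'"
  proof (intro set_eqI, clarify)
    fix x y show "(x,y) \<in> R2 \<longleftrightarrow> (x,y) \<in> R2'"
      using comb_ii[of x y t1 R1 R2 p] comb_ii[of x y t1 R1' R2' p'] eq by simp
  qed
  have "(inc_path p, [0]) \<in> combine t1 R1 R2 p" by simp
  then have "(inc_path p, [0]) \<in> combine t1 R1' R2' p'" using eq by simp
  then have a: "p = p' \<or> (p,p') \<in> R2" using R2 by simp
  have "(inc_path p', [0]) \<in> combine t1 R1' R2' p'" by simp
  then have "(inc_path p', [0]) \<in> combine t1 R1 R2 p" using eq by simp
  then have b: "p' = p \<or> (p',p) \<in> R2" by simp
  have "trans R2" "\<forall>x. (x,x) \<notin> R2" using assms(2) unfolding Adm_def by blast+
  then show "p = p'" using a b by (meson transD)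
qed

lemma Adm_decomp:
  assumes R: "R \<in> Adm (PNode (t1#ts))"
  shows "\<exists>R1\<in>Adm t1. \<exists>R2\<in>Adm (PNode ts). \<exists>p0\<in>vset (PNode ts). R = combine t1 R1 R2 p0"
proof -
  let ?V = "vset (PNode (t1#ts))"
  let ?V2 = "vset (PNode ts)"
  note A = R[unfolded Adm_def, simplified]
  have sub: "R \<subseteq> ?V \<times> ?V" using A by blast
  have tr: "trans R" using A by blast
  have ir: "(x,x) \<notin> R" for x using A by blast
  have ch: "(x,z)\<in>R \<Longrightarrow> (y,z)\<in>R \<Longrightarrow> x = y \<or> (x,y)\<in>R \<or> (y,x)\<in>R" for x y z using A by blast
  have pf: "x\<in>?V \<Longrightarrow> y\<in>?V \<Longrightarrow> strict_prefix x y \<Longrightarrow> (x,y)\<in>R" for x y using A by blast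
  have ll: "(x,y)\<in>R \<Longrightarrow> lll (PNode (t1#ts)) x y" for x y using A by blast
  define R1 where "R1 = {(x,y). (0#x,0#y)\<in>R}"
  define R2 where "R2 = {(x,y). (inc_path x,inc_path y)\<in>R}"
  have R1A: "R1 \<in> Adm t1"
    unfolding Adm_def R1_def
  proof (intro CollectI conjI)
    show "{(x, y). (0 # x, 0 # y) \<in> R} \<subseteq> vset t1 \<times> vset t1" using sub by auto
    show "\<forall>x\<in>vset t1. \<forall>y\<in>vset t1. strict_prefix x y \<longrightarrow> (x, y) \<in> {(x, y). (0 # x, 0 # y) \<in> R}"
      using pf by auto
    show "\<forall>(x, y)\<in>{(x, y). (0 # x, 0 # y) \<in> R}. lll t1 x y" using ll by (auto dest: ll)
    show "trans {(x, y). (0 # x, 0 # y) \<in> R}" using tr by (auto intro!: transI dest: transD)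
    show "\<forall>x. (x, x) \<notin> {(x, y). (0 # x, 0 # y) \<in> R}" using ir by auto
    show "\<forall>x y z. (x, z) \<in> {(x, y). (0 # x, 0 # y) \<in> R} \<longrightarrow> (y, z) \<in> {(x, y). (0 # x, 0 # y) \<in> R} \<longrightarrow>
        x = y \<or> (x, y) \<in> {(x, y). (0 # x, 0 # y) \<in> R} \<or> (y, x) \<in> {(x, y). (0 # x, 0 # y) \<in> R}"
      using ch by fastforce
  qed
  have R2A: "R2 \<in> Adm (PNode ts)"
    unfolding Adm_def R2_def
  proof (intro CollectI conjI)
    show "{(x, y). (inc_path x, inc_path y) \<in> R} \<subseteq> ?V2 \<times> ?V2" using sub by auto
    show "\<forall>x\<in>?V2. \<forall>y\<in>?V2. strict_prefix x y \<longrightarrow> (x, y) \<in> {(x, y). (inc_path x, inc_path y) \<in> R}"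
      using pf by auto
    show "\<forall>(x, y)\<in>{(x, y). (inc_path x, inc_path y) \<in> R}. lll (PNode ts) x y" using ll by (auto dest: ll)
    show "trans {(x, y). (inc_path x, inc_path y) \<in> R}" using tr by (auto intro!: transI dest: transD)
    show "\<forall>x. (x, x) \<notin> {(x, y). (inc_path x, inc_path y) \<in> R}" using ir by auto
    show "\<forall>x y z. (x, z) \<in> {(x, y). (inc_path x, inc_path y) \<in> R} \<longrightarrow> (y, z) \<in> {(x, y). (inc_path x, inc_path y) \<in> R} \<longrightarrow>
        x = y \<or> (x, y) \<in> {(x, y). (inc_path x, inc_path y) \<in> R} \<or> (y, x) \<in> {(x, y). (inc_path x, inc_path y) \<in> R}"
      using ch by fastforce
  qed
  define P where "P = {x\<in>?V2. (inc_path x, [0]) \<in> R}"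
  have P0: "[] \<in> P"
  proof -
    have "[0] \<in> ?V" by simp
    then have "(inc_path [], [0]) \<in> R" using pf[of "[]" "[0]"] by simp
    then show ?thesis unfolding P_def by simp
  qed
  have Pfin: "finite P" unfolding P_def using vset_finite by auto
  have Pch: "x = y \<or> (x,y)\<in>R2 \<or> (y,x)\<in>R2" if "x\<in>P" "y\<in>P" for x y
    using ch[of "inc_path x" "[0]" "inc_path y"] that unfolding P_def R2_def by auto
  have R2sub: "R2 \<subseteq> ?V2 \<times> ?V2" using R2A unfolding Adm_def by blast
  have tr2: "trans R2" and ir2: "(x,x) \<notin> R2" for x using R2A unfolding Adm_def by blast+
  define f where "f x = card {y\<in>?V2. (y,x)\<in>R2}" for x
  define m where "m = Max (f ` P)"
  have "m \<in> f ` P" unfolding m_def using Pfin P0 by (intro Max_in) auto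
  then obtain p0 where p0: "p0 \<in> P" "f p0 = m" by auto
  have fle: "f x \<le> m" if "x \<in> P" for x using Pfin that unfolding m_def by simp
  have pmax: "x = p0 \<or> (x,p0) \<in> R2" if x: "x \<in> P" for x
  proof (rule ccontr)
    assume "\<not> (x = p0 \<or> (x,p0) \<in> R2)"
    then have xp: "x \<noteq> p0" "(p0,x) \<in> R2" using Pch[OF x p0(1)] by auto
    have "insert p0 {y\<in>?V2. (y,p0)\<in>R2} \<subseteq> {y\<in>?V2. (y,x)\<in>R2}"
      using xp tr2 p0 unfolding P_def by (auto dest: transD)
    then have "card (insert p0 {y\<in>?V2. (y,p0)\<in>R2}) \<le> f x"
      unfolding f_def by (intro card_mono) (simp_all add: vset_finite)
    moreover have "card (insert p0 {y\<in>?V2. (y,p0)\<in>R2}) = Suc (f p0)"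
      unfolding f_def using ir2 vset_finite by (subst card_insert_disjoint) auto
    ultimately show False using fle[OF x] p0 by simp
  qed
  have p0V: "p0 \<in> ?V2" using p0 unfolding P_def by simp
  have CA: "combine t1 R1 R2 p0 \<in> Adm (PNode (t1#ts))" using combine_Adm[OF R1A R2A p0V] .
  have Csub: "combine t1 R1 R2 p0 \<subseteq> ?V \<times> ?V" using CA unfolding Adm_def by blast
  have "R = combine t1 R1 R2 p0"
  proof (intro set_eqI)
    fix z
    show "z \<in> R \<longleftrightarrow> z \<in> combine t1 R1 R2 p0"
    proof (cases "z \<in> ?V \<times> ?V")
      case False then show ?thesis using sub Csub by blast
    next
      case True
      then obtain u w where z: "z = (u,w)" "u \<in> ?V" "w \<in> ?V" by blast
      from z(2,3) have "(u,w) \<in> R \<longleftrightarrow> (u,w) \<in> combine t1 R1 R2 p0" unfolding vset_cons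
      proof (elim UnE imageE)
        fix a b assume "u = 0#a" "w = 0#b" then show ?thesis by (simp add: R1_def)
      next
        fix a b assume "u = inc_path a" "w = inc_path b" then show ?thesis by (simp add: R2_def)
      next
        fix a b assume "u = 0#a" "w = inc_path b" then show ?thesis using ll[of "0#a" "inc_path b"] by auto
      next
        fix a b assume ua: "u = inc_path a" "a \<in> ?V2" and wb: "w = 0#b" "b \<in> vset t1"
        show ?thesis
        proof
          assume uw: "(u,w) \<in> R"
          have "(inc_path a, [0]) \<in> R"
          proof (cases b)
            case Nil then show ?thesis using uw ua wb by simp
          next
            case (Cons c d)
            have "([0], w) \<in> R" using pf[of "[0]" w] wb Cons z by simp
            from ch[OF uw this] show ?thesis using ua ll[of "[0]" "inc_path a"] by auto
          qed
          then have "a \<in> P" using ua unfolding P_def by simp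
          then show "(u,w) \<in> combine t1 R1 R2 p0" using pmax ua wb by simp
        next
          assume "(u,w) \<in> combine t1 R1 R2 p0"
          then have aa: "a = p0 \<or> (a,p0) \<in> R2" using ua wb by simp
          have "(inc_path p0, [0]) \<in> R" using p0 unfolding P_def by simp
          then have a0: "(inc_path a, [0]) \<in> R" using aa tr unfolding R2_def by (auto dest: transD)
          show "(u,w) \<in> R"
          proof (cases b)
            case Nil then show ?thesis using a0 ua wb by simp
          next
            case (Cons c d)
            have "([0], w) \<in> R" using pf[of "[0]" w] wb Cons z by simp
            then show ?thesis using a0 ua tr by (auto dest: transD)
          qed
        qed
      qed
      then show ?thesis using z(1) by simp
    qed
  qed
  then show ?thesis using R1A R2A p0V by blast
qed



fun glue :: "(nat list \<Rightarrow> nat list) \<Rightarrow> (nat list \<Rightarrow> nat list) \<Rightarrow> nat list \<Rightarrow> nat list \<Rightarrow> nat list" where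
  "glue \<alpha> \<beta> v (0#p) = v @ 0 # \<alpha> p"
| "glue \<alpha> \<beta> v x = shift v (\<beta> (dec_path x))"

lemma glue_inc[simp]: "glue \<alpha> \<beta> v (inc_path q) = shift v (\<beta> q)"
  by (cases q) auto

definition rel :: "ptree \<Rightarrow> ptree \<Rightarrow> (nat list \<Rightarrow> nat list) \<Rightarrow> (nat list \<times> nat list) set" where
  "rel \<tau> s \<psi> = {(x,y). x \<in> vset \<tau> \<and> y \<in> vset \<tau> \<and> strict_prefix (\<psi> x) (\<psi> y)}"

lemma sp_append[simp]: "strict_prefix (v @ a) (v @ b) \<longleftrightarrow> strict_prefix a b"
  by (induction v) auto

lemma combine_sub:
  assumes "R1 \<subseteq> vset t1 \<times> vset t1" "R2 \<subseteq> vset (PNode ts) \<times> vset (PNode ts)" "p0 \<in> vset (PNode ts)"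
  shows "combine t1 R1 R2 p0 \<subseteq> vset (PNode (t1#ts)) \<times> vset (PNode (t1#ts))"
proof
  fix z assume "z \<in> combine t1 R1 R2 p0"
  then obtain u w where z: "z = (u,w)" "(u,w) \<in> combine t1 R1 R2 p0" by (cases z) auto
  from z(2) show "z \<in> vset (PNode (t1#ts)) \<times> vset (PNode (t1#ts))"
    by (cases rule: comb_cases) (use z assms in \<open>auto simp: vset_cons\<close>)
qed

lemma rel_graft:
  assumes \<alpha>: "bij_betw \<alpha> (vset t1) (vset a)" and \<beta>: "bij_betw \<beta> (vset (PNode ts)) (vset b)"
    and p0: "p0 \<in> vset (PNode ts)"
  shows "rel (PNode (t1#ts)) (graft_at a (\<beta> p0) b) (glue \<alpha> \<beta> (\<beta> p0))
       = combine t1 (rel t1 a \<alpha>) (rel (PNode ts) b \<beta>) p0"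
proof (intro set_eqI)
  fix z
  let ?V = "vset (PNode (t1#ts))"
  have csub: "combine t1 (rel t1 a \<alpha>) (rel (PNode ts) b \<beta>) p0 \<subseteq> ?V \<times> ?V"
    by (rule combine_sub) (auto simp: rel_def p0)
  have rsub: "rel t s \<psi> \<subseteq> vset t \<times> vset t" for t s \<psi> by (auto simp: rel_def)
  have binj: "\<beta> x = \<beta> y \<longleftrightarrow> x = y" if "x \<in> vset (PNode ts)" "y \<in> vset (PNode ts)" for x y
    using \<beta> that by (auto simp: bij_betw_def inj_on_def)
  show "z \<in> rel (PNode (t1#ts)) (graft_at a (\<beta> p0) b) (glue \<alpha> \<beta> (\<beta> p0))
       \<longleftrightarrow> z \<in> combine t1 (rel t1 a \<alpha>) (rel (PNode ts) b \<beta>) p0"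
  proof (cases "z \<in> ?V \<times> ?V")
    case False then show ?thesis using csub rsub by blast
  next
    case True
    then obtain u w where z: "z = (u,w)" "u \<in> ?V" "w \<in> ?V" by blast
    from z(2,3) have "(u,w) \<in> rel (PNode (t1#ts)) (graft_at a (\<beta> p0) b) (glue \<alpha> \<beta> (\<beta> p0))
       \<longleftrightarrow> (u,w) \<in> combine t1 (rel t1 a \<alpha>) (rel (PNode ts) b \<beta>) p0" unfolding vset_cons
    proof (elim UnE imageE)
      fix x y assume "u = 0#x" "x \<in> vset t1" "w = 0#y" "y \<in> vset t1"
      then show ?thesis by (simp add: rel_def)
    next
      fix x y assume "u = 0#x" "x \<in> vset t1" "w = inc_path y" "y \<in> vset (PNode ts)"
      then show ?thesis by (simp add: rel_def)
    next
      fix x y assume "u = inc_path x" "x \<in> vset (PNode ts)" "w = inc_path y" "y \<in> vset (PNode ts)"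
      then show ?thesis by (simp add: rel_def)
    next
      fix x y assume "u = inc_path x" "x \<in> vset (PNode ts)" "w = 0#y" "y \<in> vset t1"
      then show ?thesis using binj[of x p0] p0 by (auto simp: rel_def prefix_order.le_less)
    qed
    then show ?thesis using z(1) by simp
  qed
qed

lemma glue_bij:
  assumes \<alpha>: "bij_betw \<alpha> (vset t1) (vset a)" and \<beta>: "bij_betw \<beta> (vset (PNode ts)) (vset b)"
    and v: "v \<in> vset b"
  shows "bij_betw (glue \<alpha> \<beta> v) (vset (PNode (t1#ts))) (vset (graft_at a v b))"
proof (rule bij_betw_imageI)
  have ainj: "\<alpha> x = \<alpha> y \<longleftrightarrow> x = y" if "x \<in> vset t1" "y \<in> vset t1" for x y
    using \<alpha> that by (auto simp: bij_betw_def inj_on_def)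
  have binj: "\<beta> x = \<beta> y \<longleftrightarrow> x = y" if "x \<in> vset (PNode ts)" "y \<in> vset (PNode ts)" for x y
    using \<beta> that by (auto simp: bij_betw_def inj_on_def)
  show "inj_on (glue \<alpha> \<beta> v) (vset (PNode (t1 # ts)))"
  proof (rule inj_onI)
    fix x y assume x: "x \<in> vset (PNode (t1 # ts))" and y: "y \<in> vset (PNode (t1 # ts))"
      and e: "glue \<alpha> \<beta> v x = glue \<alpha> \<beta> v y"
    from x y show "x = y" unfolding vset_cons
    proof (elim UnE imageE)
      fix p q assume "x = 0#p" "p \<in> vset t1" "y = 0#q" "q \<in> vset t1"
      then show ?thesis using e ainj by simp
    next
      fix p q assume "x = 0#p" "p \<in> vset t1" "y = inc_path q" "q \<in> vset (PNode ts)"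
      then show ?thesis using e shift_ne[of v "\<beta> q" "\<alpha> p"] by simp
    next
      fix p q assume "x = inc_path p" "p \<in> vset (PNode ts)" "y = 0#q" "q \<in> vset t1"
      then show ?thesis using e shift_ne[of v "\<beta> p" "\<alpha> q"] by simp
    next
      fix p q assume "x = inc_path p" "p \<in> vset (PNode ts)" "y = inc_path q" "q \<in> vset (PNode ts)"
      then show ?thesis using e binj by simp
    qed
  qed
  have "glue \<alpha> \<beta> v ` vset (PNode (t1 # ts)) = (\<lambda>p. v @ 0 # p) ` (\<alpha> ` vset t1) \<union> shift v ` (\<beta> ` vset (PNode ts))"
    unfolding vset_cons image_Un image_image by simp
  also have "\<dots> = vset (graft_at a v b)"
    using vset_graft[OF v] \<alpha> \<beta> by (simp add: bij_betw_def)
  finally show "glue \<alpha> \<beta> v ` vset (PNode (t1 # ts)) = vset (graft_at a v b)" .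
qed

fun PsiW :: "ptree \<Rightarrow> (ptree \<times> (nat list \<Rightarrow> nat list)) multiset" where
  "PsiW (PNode []) = {#(PNode [], id)#}"
| "PsiW (PNode (t1 # ts)) = \<Sum>\<^sub># (image_mset (\<lambda>(a,\<alpha>). \<Sum>\<^sub># (image_mset (\<lambda>(b,\<beta>).
      image_mset (\<lambda>v. (graft_at a v b, glue \<alpha> \<beta> v)) (mset_set (vset b))) (PsiW (PNode ts)))) (PsiW t1))"

lemma image_mset_sum_mset: "image_mset f (\<Sum>\<^sub># MM) = \<Sum>\<^sub># (image_mset (image_mset f) MM)"
  by (induction MM) auto

lemma PsiW_fst: "image_mset fst (PsiW \<tau>) = Psi \<tau>"
proof (induction \<tau> rule: Psi.induct)
  case 1 then show ?case by simp
next
  case (2 t1 ts)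
  have "image_mset fst (PsiW (PNode (t1 # ts))) =
     \<Sum>\<^sub># (image_mset (\<lambda>x. \<Sum>\<^sub># (image_mset (\<lambda>y. graft (fst x) (fst y)) (PsiW (PNode ts)))) (PsiW t1))"
    by (simp add: image_mset_sum_mset image_mset.compositionality o_def case_prod_beta graft_def)
  also have "\<dots> = \<Sum>\<^sub># (image_mset (\<lambda>a. \<Sum>\<^sub># (image_mset (\<lambda>b. graft a b) (image_mset fst (PsiW (PNode ts))))) (image_mset fst (PsiW t1)))"
    by (simp add: image_mset.compositionality o_def)
  also have "\<dots> = Psi (PNode (t1 # ts))" using 2 by (simp add: graft_ms_def)
  finally show ?case .
qed

lemma mset_set_prod:
  assumes "finite A" "finite B"
  shows "mset_set (A \<times> B) = \<Sum>\<^sub># (image_mset (\<lambda>a. image_mset (Pair a) (mset_set B)) (mset_set A))"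
  using assms(1)
proof (induction A rule: finite_induct)
  case empty then show ?case by simp
next
  case (insert a A)
  have "insert a A \<times> B = Pair a ` B \<union> A \<times> B" by auto
  then have "mset_set (insert a A \<times> B) = mset_set (Pair a ` B) + mset_set (A \<times> B)"
    using insert assms(2) by (simp add: mset_set_Union) (subst mset_set_Union; auto)
  also have "mset_set (Pair a ` B) = image_mset (Pair a) (mset_set B)"
    by (simp add: image_mset_mset_set inj_on_def)
  finally show ?case using insert by simp
qed

lemma finite_Adm: "finite (Adm \<tau>)"
proof -
  have "Adm \<tau> \<subseteq> Pow (vset \<tau> \<times> vset \<tau>)" unfolding Adm_def by blast
  then show ?thesis by (rule finite_subset) (simp add: vset_finite)
qed

lemma vset_leaf[simp]: "vset (PNode []) = {[]}" by (simp add: vset_node)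

lemma Adm_leaf: "Adm (PNode []) = {{}}"
proof -
  have "R \<in> Adm (PNode []) \<longleftrightarrow> R = {}" for R
  proof
    assume "R \<in> Adm (PNode [])"
    then have "R \<subseteq> {([],[])}" "([],[]) \<notin> R" unfolding Adm_def by auto
    then show "R = {}" by blast
  next
    assume "R = {}" then show "R \<in> Adm (PNode [])" unfolding Adm_def by (auto simp: trans_def)
  qed
  then show ?thesis by blast
qed

lemma Adm_image: "(\<lambda>(R1,R2,p). combine t1 R1 R2 p) ` (Adm t1 \<times> Adm (PNode ts) \<times> vset (PNode ts)) = Adm (PNode (t1#ts))"
  using combine_Adm Adm_decomp by fastforce

lemma combine_inj_on: "inj_on (\<lambda>(R1,R2,p). combine t1 R1 R2 p) (Adm t1 \<times> Adm (PNode ts) \<times> vset (PNode ts))"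
  by (rule inj_onI) (auto dest: combine_inj)

lemma PsiW_inv: "(\<forall>x\<in>#PsiW \<tau>. bij_betw (snd x) (vset \<tau>) (vset (fst x)))
   \<and> image_mset (\<lambda>x. rel \<tau> (fst x) (snd x)) (PsiW \<tau>) = mset_set (Adm \<tau>)"
proof (induction \<tau> rule: Psi.induct)
  case 1
  have "rel (PNode []) (PNode []) id = {}" by (simp add: rel_def)
  then show ?case by (simp add: Adm_leaf)
next
  case (2 t1 ts)
  let ?\<tau> = "PNode (t1#ts)" and ?\<tau>2 = "PNode ts"
  let ?M1 = "PsiW t1" and ?M2 = "PsiW (PNode ts)"
  have b1: "bij_betw (snd x) (vset t1) (vset (fst x))" if "x \<in># ?M1" for x using 2 that by blast
  have b2: "bij_betw (snd y) (vset ?\<tau>2) (vset (fst y))" if "y \<in># ?M2" for y using 2 that by blast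
  have bij: "\<forall>x\<in>#PsiW ?\<tau>. bij_betw (snd x) (vset ?\<tau>) (vset (fst x))"
  proof
    fix z assume "z \<in># PsiW ?\<tau>"
    then obtain x y v where xy: "x \<in># ?M1" "y \<in># ?M2" "v \<in> vset (fst y)"
      and z: "z = (graft_at (fst x) v (fst y), glue (snd x) (snd y) v)"
      by (auto simp: vset_finite split: prod.splits)
    show "bij_betw (snd z) (vset ?\<tau>) (vset (fst z))"
      using glue_bij[OF b1[OF xy(1)] b2[OF xy(2)] xy(3)] z by simp
  qed
  have inner: "image_mset (\<lambda>v. rel ?\<tau> (graft_at (fst x) v (fst y)) (glue (snd x) (snd y) v)) (mset_set (vset (fst y)))
     = image_mset (combine t1 (rel t1 (fst x) (snd x)) (rel ?\<tau>2 (fst y) (snd y))) (mset_set (vset ?\<tau>2))"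
    if x: "x \<in># ?M1" and y: "y \<in># ?M2" for x y
  proof -
    have "mset_set (vset (fst y)) = image_mset (snd y) (mset_set (vset ?\<tau>2))"
      using b2[OF y] by (simp add: image_mset_mset_set bij_betw_def)
    then have "image_mset (\<lambda>v. rel ?\<tau> (graft_at (fst x) v (fst y)) (glue (snd x) (snd y) v)) (mset_set (vset (fst y)))
       = image_mset (\<lambda>p. rel ?\<tau> (graft_at (fst x) (snd y p) (fst y)) (glue (snd x) (snd y) (snd y p))) (mset_set (vset ?\<tau>2))"
      by (simp add: image_mset.compositionality o_def)
    also have "\<dots> = image_mset (combine t1 (rel t1 (fst x) (snd x)) (rel ?\<tau>2 (fst y) (snd y))) (mset_set (vset ?\<tau>2))"
      by (intro image_mset_cong rel_graft b1[OF x] b2[OF y]) (simp add: vset_finite)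
    finally show ?thesis .
  qed
  have "image_mset (\<lambda>x. rel ?\<tau> (fst x) (snd x)) (PsiW ?\<tau>)
     = \<Sum>\<^sub># (image_mset (\<lambda>x. \<Sum>\<^sub># (image_mset (\<lambda>y.
          image_mset (\<lambda>v. rel ?\<tau> (graft_at (fst x) v (fst y)) (glue (snd x) (snd y) v)) (mset_set (vset (fst y)))) ?M2)) ?M1)"
    by (simp add: image_mset_sum_mset image_mset.compositionality o_def case_prod_beta)
  also have "\<dots> = \<Sum>\<^sub># (image_mset (\<lambda>x. \<Sum>\<^sub># (image_mset (\<lambda>y.
          image_mset (combine t1 (rel t1 (fst x) (snd x)) (rel ?\<tau>2 (fst y) (snd y))) (mset_set (vset ?\<tau>2))) ?M2)) ?M1)"
    by (intro arg_cong[where f=sum_mset] image_mset_cong) (simp add: inner)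
  also have "\<dots> = \<Sum>\<^sub># (image_mset (\<lambda>R1. \<Sum>\<^sub># (image_mset (\<lambda>R2.
          image_mset (combine t1 R1 R2) (mset_set (vset ?\<tau>2)))
            (image_mset (\<lambda>y. rel ?\<tau>2 (fst y) (snd y)) ?M2)))
            (image_mset (\<lambda>x. rel t1 (fst x) (snd x)) ?M1))"
    by (simp add: image_mset.compositionality o_def)
  also have "\<dots> = \<Sum>\<^sub># (image_mset (\<lambda>R1. \<Sum>\<^sub># (image_mset (\<lambda>R2.
          image_mset (combine t1 R1 R2) (mset_set (vset ?\<tau>2))) (mset_set (Adm ?\<tau>2)))) (mset_set (Adm t1)))"
    using 2 by simp
  also have "\<dots> = image_mset (\<lambda>(R1,R2,p). combine t1 R1 R2 p) (mset_set (Adm t1 \<times> Adm ?\<tau>2 \<times> vset ?\<tau>2))"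
    by (simp add: mset_set_prod finite_Adm vset_finite image_mset_sum_mset image_mset.compositionality o_def)
  also have "\<dots> = mset_set (Adm ?\<tau>)"
    by (simp add: image_mset_mset_set[OF combine_inj_on] Adm_image)
  finally show ?case using bij by blast
qed



definition isoR :: "ptree \<Rightarrow> (nat list \<times> nat list) set \<Rightarrow> ptree \<Rightarrow> bool" where
  "isoR \<tau> R \<sigma> \<longleftrightarrow> (\<exists>\<psi>. bij_betw \<psi> (vset \<tau>) (vset \<sigma>) \<and>
     (\<forall>x\<in>vset \<tau>. \<forall>y\<in>vset \<tau>. (x,y)\<in>R \<longleftrightarrow> strict_prefix (\<psi> x) (\<psi> y)))"

lemma isoR_rel:
  assumes \<psi>: "bij_betw \<psi> (vset \<tau>) (vset s)"
  shows "isoR \<tau> (rel \<tau> s \<psi>) \<sigma> \<longleftrightarrow> (\<exists>f. tiso s \<sigma> f)"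
proof
  assume "\<exists>f. tiso s \<sigma> f"
  then obtain f where f: "bij_betw f (vset s) (vset \<sigma>)"
    "\<forall>x\<in>vset s. \<forall>y\<in>vset s. strict_prefix x y \<longleftrightarrow> strict_prefix (f x) (f y)"
    unfolding tiso_def by blast
  have "bij_betw (f \<circ> \<psi>) (vset \<tau>) (vset \<sigma>)" using \<psi> f(1) by (rule bij_betw_trans)
  moreover have "\<forall>x\<in>vset \<tau>. \<forall>y\<in>vset \<tau>. (x,y)\<in>rel \<tau> s \<psi> \<longleftrightarrow> strict_prefix ((f\<circ>\<psi>) x) ((f\<circ>\<psi>) y)"
    using f(2) \<psi> by (auto simp: rel_def bij_betw_def)
  ultimately show "isoR \<tau> (rel \<tau> s \<psi>) \<sigma>" unfolding isoR_def by blast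
next
  assume "isoR \<tau> (rel \<tau> s \<psi>) \<sigma>"
  then obtain \<chi> where \<chi>: "bij_betw \<chi> (vset \<tau>) (vset \<sigma>)"
    "\<forall>x\<in>vset \<tau>. \<forall>y\<in>vset \<tau>. (x,y)\<in>rel \<tau> s \<psi> \<longleftrightarrow> strict_prefix (\<chi> x) (\<chi> y)"
    unfolding isoR_def by blast
  let ?f = "\<chi> \<circ> inv_into (vset \<tau>) \<psi>"
  have "bij_betw ?f (vset s) (vset \<sigma>)"
    using bij_betw_inv_into[OF \<psi>] \<chi>(1) by (rule bij_betw_trans)
  moreover have "\<forall>u\<in>vset s. \<forall>w\<in>vset s. strict_prefix u w \<longleftrightarrow> strict_prefix (?f u) (?f w)"
  proof (intro ballI)
    fix u w assume u: "u \<in> vset s" and w: "w \<in> vset s"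
    let ?x = "inv_into (vset \<tau>) \<psi> u" and ?y = "inv_into (vset \<tau>) \<psi> w"
    have xy: "?x \<in> vset \<tau>" "?y \<in> vset \<tau>"
      using bij_betw_inv_into[OF \<psi>] u w by (auto simp: bij_betw_def)
    have pe: "\<psi> ?x = u" "\<psi> ?y = w" using bij_betw_inv_into_right[OF \<psi>] u w by auto
    have "strict_prefix (\<psi> ?x) (\<psi> ?y) \<longleftrightarrow> strict_prefix (\<chi> ?x) (\<chi> ?y)"
      using \<chi>(2) xy by (simp add: rel_def)
    then show "strict_prefix u w \<longleftrightarrow> strict_prefix (?f u) (?f w)"
      using pe by simp
  qed
  ultimately show "\<exists>f. tiso s \<sigma> f" unfolding tiso_def by blast
qed

lemma count_eq_card:
  "count (image_mset forget (Psi \<tau>)) (forget \<sigma>) = card {R \<in> Adm \<tau>. isoR \<tau> R \<sigma>}"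
proof -
  have inv: "\<forall>x\<in>#PsiW \<tau>. bij_betw (snd x) (vset \<tau>) (vset (fst x))"
    and im: "image_mset (\<lambda>x. rel \<tau> (fst x) (snd x)) (PsiW \<tau>) = mset_set (Adm \<tau>)"
    using PsiW_inv by blast+
  have "count (image_mset forget (Psi \<tau>)) (forget \<sigma>)
     = size (filter_mset (\<lambda>x. forget (fst x) = forget \<sigma>) (PsiW \<tau>))"
    by (simp add: count_conv_size_mset PsiW_fst[symmetric] image_mset.compositionality
        filter_mset_image_mset o_def)
  also have "filter_mset (\<lambda>x. forget (fst x) = forget \<sigma>) (PsiW \<tau>)
      = filter_mset (\<lambda>x. isoR \<tau> (rel \<tau> (fst x) (snd x)) \<sigma>) (PsiW \<tau>)"
    by (rule filter_mset_cong0) (use inv isoR_rel forget_eq_iff_tiso in blast)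
  also have "size \<dots> = size (filter_mset (\<lambda>R. isoR \<tau> R \<sigma>) (image_mset (\<lambda>x. rel \<tau> (fst x) (snd x)) (PsiW \<tau>)))"
    by (simp add: filter_mset_image_mset)
  also have "\<dots> = card {R \<in> Adm \<tau>. isoR \<tau> R \<sigma>}"
    using im by (simp add: finite_Adm)
  finally show ?thesis .
qed



lemma inv_incr:
  assumes "bij_betw g A B"
  shows "(\<forall>x\<in>B. \<forall>y\<in>B. P x y \<longrightarrow> Q (inv_into A g x) (inv_into A g y)) \<longleftrightarrow>
         (\<forall>v\<in>A. \<forall>w\<in>A. P (g v) (g w) \<longrightarrow> Q v w)"
proof
  assume h: "\<forall>x\<in>B. \<forall>y\<in>B. P x y \<longrightarrow> Q (inv_into A g x) (inv_into A g y)"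
  show "\<forall>v\<in>A. \<forall>w\<in>A. P (g v) (g w) \<longrightarrow> Q v w"
  proof (intro ballI impI)
    fix v w assume v: "v \<in> A" and w: "w \<in> A" and p: "P (g v) (g w)"
    have "g v \<in> B" "g w \<in> B" using assms v w by (auto simp: bij_betw_def)
    then have "Q (inv_into A g (g v)) (inv_into A g (g w))" using h p by blast
    then show "Q v w" using bij_betw_inv_into_left[OF assms] v w by simp
  qed
next
  assume h: "\<forall>v\<in>A. \<forall>w\<in>A. P (g v) (g w) \<longrightarrow> Q v w"
  show "\<forall>x\<in>B. \<forall>y\<in>B. P x y \<longrightarrow> Q (inv_into A g x) (inv_into A g y)"
  proof (intro ballI impI)
    fix x y assume x: "x \<in> B" and y: "y \<in> B" and p: "P x y"
    have i: "inv_into A g x \<in> A" "inv_into A g y \<in> A"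
      using bij_betw_inv_into[OF assms] x y by (auto simp: bij_betw_def)
    have "g (inv_into A g x) = x" "g (inv_into A g y) = y"
      using bij_betw_inv_into_right[OF assms] x y by auto
    then show "Q (inv_into A g x) (inv_into A g y)" using h i p by metis
  qed
qed

definition autset :: "ptree \<Rightarrow> (nat list \<Rightarrow> nat list) set" where
  "autset s = {\<phi> \<in> vset s \<rightarrow>\<^sub>E vset s. bij_betw \<phi> (vset s) (vset s)
      \<and> (\<forall>v\<in>vset s. \<forall>w\<in>vset s. below v w \<longrightarrow> below (\<phi> v) (\<phi> w))
      \<and> (\<forall>x\<in>vset s. \<forall>y\<in>vset s. below x y \<longrightarrow>
            below (inv_into (vset s) \<phi> x) (inv_into (vset s) \<phi> y))}"

lemma symf_autset: "symf s = card (autset s)" by (simp add: symf_def autset_def)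

lemma autset_iff: "g \<in> autset s \<longleftrightarrow> g \<in> vset s \<rightarrow>\<^sub>E vset s \<and> bij_betw g (vset s) (vset s)
   \<and> (\<forall>v\<in>vset s. \<forall>w\<in>vset s. strict_prefix v w \<longleftrightarrow> strict_prefix (g v) (g w))"
  unfolding autset_def using inv_incr[of g "vset s" "vset s" strict_prefix strict_prefix] by blast

definition btset :: "ptree \<Rightarrow> ptree \<Rightarrow> (nat list \<Rightarrow> nat list) set" where
  "btset s \<tau> = {\<phi> \<in> vset s \<rightarrow>\<^sub>E vset \<tau>. bij_betw \<phi> (vset s) (vset \<tau>)
      \<and> (\<forall>v\<in>vset s. \<forall>w\<in>vset s. below v w \<longrightarrow> lll \<tau> (\<phi> v) (\<phi> w))
      \<and> (\<forall>x\<in>vset \<tau>. \<forall>y\<in>vset \<tau>. below x y \<longrightarrow>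
            below (inv_into (vset s) \<phi> x) (inv_into (vset s) \<phi> y))}"

lemma btilde_btset: "btilde s \<tau> = card (btset s \<tau>)" by (simp add: btilde_def btset_def)

definition Fset :: "ptree \<Rightarrow> ptree \<Rightarrow> (nat list \<times> nat list) set \<Rightarrow> (nat list \<Rightarrow> nat list) set" where
  "Fset \<sigma> \<tau> R = {\<phi> \<in> vset \<sigma> \<rightarrow>\<^sub>E vset \<tau>. bij_betw \<phi> (vset \<sigma>) (vset \<tau>)
      \<and> (\<forall>v\<in>vset \<sigma>. \<forall>w\<in>vset \<sigma>. (\<phi> v, \<phi> w) \<in> R \<longleftrightarrow> strict_prefix v w)}"

lemma rel_Adm:
  assumes \<psi>: "bij_betw \<psi> (vset \<tau>) (vset s)"
    and up: "\<forall>x\<in>vset \<tau>. \<forall>y\<in>vset \<tau>. strict_prefix x y \<longrightarrow> strict_prefix (\<psi> x) (\<psi> y)"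
    and lo: "\<forall>x\<in>vset \<tau>. \<forall>y\<in>vset \<tau>. strict_prefix (\<psi> x) (\<psi> y) \<longrightarrow> lll \<tau> x y"
  shows "rel \<tau> s \<psi> \<in> Adm \<tau>"
proof -
  have inj: "\<psi> x = \<psi> y \<longleftrightarrow> x = y" if "x \<in> vset \<tau>" "y \<in> vset \<tau>" for x y
    using \<psi> that by (auto simp: bij_betw_def inj_on_def)
  have "trans (rel \<tau> s \<psi>)" by (auto simp: rel_def intro!: transI dest: prefix_order.less_trans)
  moreover have "\<forall>x y z. (x,z)\<in>rel \<tau> s \<psi> \<longrightarrow> (y,z)\<in>rel \<tau> s \<psi> \<longrightarrow>
      x = y \<or> (x,y)\<in>rel \<tau> s \<psi> \<or> (y,x)\<in>rel \<tau> s \<psi>"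
  proof (intro allI impI)
    fix x y z assume "(x,z)\<in>rel \<tau> s \<psi>" "(y,z)\<in>rel \<tau> s \<psi>"
    then have h: "x \<in> vset \<tau>" "y \<in> vset \<tau>" "prefix (\<psi> x) (\<psi> z)" "prefix (\<psi> y) (\<psi> z)"
      by (auto simp: rel_def strict_prefix_def)
    then have "prefix (\<psi> x) (\<psi> y) \<or> prefix (\<psi> y) (\<psi> x)" using prefix_same_cases by blast
    then show "x = y \<or> (x,y)\<in>rel \<tau> s \<psi> \<or> (y,x)\<in>rel \<tau> s \<psi>"
      using h inj[of x y] by (auto simp: rel_def strict_prefix_def)
  qed
  ultimately show ?thesis using up lo unfolding Adm_def rel_def by auto
qed

lemma btset_eq: "btset \<sigma> \<tau> = \<Union> (Fset \<sigma> \<tau> ` {R \<in> Adm \<tau>. isoR \<tau> R \<sigma>})"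
proof (intro set_eqI iffI)
  fix \<phi> assume "\<phi> \<in> btset \<sigma> \<tau>"
  then have pe: "\<phi> \<in> vset \<sigma> \<rightarrow>\<^sub>E vset \<tau>" and b: "bij_betw \<phi> (vset \<sigma>) (vset \<tau>)"
    and fw: "\<forall>v\<in>vset \<sigma>. \<forall>w\<in>vset \<sigma>. strict_prefix v w \<longrightarrow> lll \<tau> (\<phi> v) (\<phi> w)"
    and bw: "\<forall>x\<in>vset \<tau>. \<forall>y\<in>vset \<tau>. strict_prefix x y \<longrightarrow>
            strict_prefix (inv_into (vset \<sigma>) \<phi> x) (inv_into (vset \<sigma>) \<phi> y)"
    unfolding btset_def by blast+
  let ?\<psi> = "inv_into (vset \<sigma>) \<phi>"
  have \<psi>: "bij_betw ?\<psi> (vset \<tau>) (vset \<sigma>)" using bij_betw_inv_into[OF b] .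
  have lo: "\<forall>x\<in>vset \<tau>. \<forall>y\<in>vset \<tau>. strict_prefix (?\<psi> x) (?\<psi> y) \<longrightarrow> lll \<tau> x y"
    using inv_incr[OF b, of strict_prefix "\<lambda>a b. lll \<tau> a b"] fw
    using inv_incr[OF b, of "\<lambda>a b. strict_prefix (?\<psi> a) (?\<psi> b)" "\<lambda>a b. lll \<tau> (\<phi> a) (\<phi> b)"]
    by (simp add: bij_betw_inv_into_left[OF b] bij_betw_inv_into_right[OF b])
  have RA: "rel \<tau> \<sigma> ?\<psi> \<in> Adm \<tau>" using rel_Adm[OF \<psi> bw lo] .
  have Ri: "isoR \<tau> (rel \<tau> \<sigma> ?\<psi>) \<sigma>" unfolding isoR_def using \<psi> by (auto simp: rel_def)
  have "\<phi> \<in> Fset \<sigma> \<tau> (rel \<tau> \<sigma> ?\<psi>)"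
    unfolding Fset_def using pe b
    by (auto simp: rel_def bij_betw_inv_into_left[OF b] bij_betwE[OF b])
  then show "\<phi> \<in> \<Union> (Fset \<sigma> \<tau> ` {R \<in> Adm \<tau>. isoR \<tau> R \<sigma>})" using RA Ri by blast
next
  fix \<phi> assume "\<phi> \<in> \<Union> (Fset \<sigma> \<tau> ` {R \<in> Adm \<tau>. isoR \<tau> R \<sigma>})"
  then obtain R where R: "R \<in> Adm \<tau>" and F: "\<phi> \<in> Fset \<sigma> \<tau> R" by blast
  have pe: "\<phi> \<in> vset \<sigma> \<rightarrow>\<^sub>E vset \<tau>" and b: "bij_betw \<phi> (vset \<sigma>) (vset \<tau>)"
    and o: "\<forall>v\<in>vset \<sigma>. \<forall>w\<in>vset \<sigma>. (\<phi> v, \<phi> w) \<in> R \<longleftrightarrow> strict_prefix v w"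
    using F unfolding Fset_def by blast+
  have pf: "\<forall>x\<in>vset \<tau>. \<forall>y\<in>vset \<tau>. strict_prefix x y \<longrightarrow> (x,y)\<in>R"
    and ll: "\<forall>(x,y)\<in>R. lll \<tau> x y" using R unfolding Adm_def by blast+
  have fw: "\<forall>v\<in>vset \<sigma>. \<forall>w\<in>vset \<sigma>. strict_prefix v w \<longrightarrow> lll \<tau> (\<phi> v) (\<phi> w)"
    using o ll by blast
  have "\<forall>v\<in>vset \<sigma>. \<forall>w\<in>vset \<sigma>. strict_prefix (\<phi> v) (\<phi> w) \<longrightarrow> strict_prefix v w"
    using o pf bij_betwE[OF b] by blast
  then have bw: "\<forall>x\<in>vset \<tau>. \<forall>y\<in>vset \<tau>. strict_prefix x y \<longrightarrow>
            strict_prefix (inv_into (vset \<sigma>) \<phi> x) (inv_into (vset \<sigma>) \<phi> y)"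
    using inv_incr[OF b, of strict_prefix strict_prefix] by blast
  show "\<phi> \<in> btset \<sigma> \<tau>" unfolding btset_def using pe b fw bw by blast
qed

lemma Fset_disj:
  assumes "R \<in> Adm \<tau>" "R' \<in> Adm \<tau>" "R \<noteq> R'"
  shows "Fset \<sigma> \<tau> R \<inter> Fset \<sigma> \<tau> R' = {}"
proof (rule ccontr)
  assume "Fset \<sigma> \<tau> R \<inter> Fset \<sigma> \<tau> R' \<noteq> {}"
  then obtain \<phi> where a: "\<phi> \<in> Fset \<sigma> \<tau> R" and b': "\<phi> \<in> Fset \<sigma> \<tau> R'" by blast
  have b: "bij_betw \<phi> (vset \<sigma>) (vset \<tau>)"
    and o: "\<forall>v\<in>vset \<sigma>. \<forall>w\<in>vset \<sigma>. (\<phi> v, \<phi> w) \<in> R \<longleftrightarrow> strict_prefix v w"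
    and o': "\<forall>v\<in>vset \<sigma>. \<forall>w\<in>vset \<sigma>. (\<phi> v, \<phi> w) \<in> R' \<longleftrightarrow> strict_prefix v w"
    using a b' unfolding Fset_def by blast+
  have s: "R \<subseteq> vset \<tau> \<times> vset \<tau>" "R' \<subseteq> vset \<tau> \<times> vset \<tau>" using assms unfolding Adm_def by blast+
  have "R = R'"
  proof (intro set_eqI)
    fix z show "z \<in> R \<longleftrightarrow> z \<in> R'"
    proof (cases "z \<in> vset \<tau> \<times> vset \<tau>")
      case False then show ?thesis using s by blast
    next
      case True
      then obtain x y where z: "z = (x,y)" "x \<in> vset \<tau>" "y \<in> vset \<tau>" by blast
      then obtain v w where "v \<in> vset \<sigma>" "w \<in> vset \<sigma>" "x = \<phi> v" "y = \<phi> w"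
        using b by (metis bij_betw_def imageE)
      then show ?thesis using o o' z by simp
    qed
  qed
  then show False using assms by simp
qed

lemma Fset_card:
  assumes iso: "isoR \<tau> R \<sigma>"
  shows "card (Fset \<sigma> \<tau> R) = card (autset \<sigma>)"
proof -
  obtain \<psi> where \<psi>: "bij_betw \<psi> (vset \<tau>) (vset \<sigma>)"
    and o: "\<forall>x\<in>vset \<tau>. \<forall>y\<in>vset \<tau>. (x,y)\<in>R \<longleftrightarrow> strict_prefix (\<psi> x) (\<psi> y)"
    using iso unfolding isoR_def by blast
  let ?\<psi>' = "inv_into (vset \<tau>) \<psi>"
  have \<psi>': "bij_betw ?\<psi>' (vset \<sigma>) (vset \<tau>)" using bij_betw_inv_into[OF \<psi>] .
  have l1: "\<psi> (?\<psi>' u) = u" if "u \<in> vset \<sigma>" for u using bij_betw_inv_into_right[OF \<psi> that] .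
  have l2: "?\<psi>' (\<psi> x) = x" if "x \<in> vset \<tau>" for x using bij_betw_inv_into_left[OF \<psi> that] .
  define \<theta> where "\<theta> g = restrict (?\<psi>' \<circ> g) (vset \<sigma>)" for g :: "nat list \<Rightarrow> nat list"
  define \<iota> where "\<iota> \<phi> = restrict (\<psi> \<circ> \<phi>) (vset \<sigma>)" for \<phi> :: "nat list \<Rightarrow> nat list"
  have "bij_betw \<theta> (autset \<sigma>) (Fset \<sigma> \<tau> R)"
  proof (rule bij_betw_byWitness[where f'=\<iota>])
    show "\<forall>g\<in>autset \<sigma>. \<iota> (\<theta> g) = g"
    proof
      fix g assume g: "g \<in> autset \<sigma>"
      then have gp: "g \<in> vset \<sigma> \<rightarrow>\<^sub>E vset \<sigma>" by (simp add: autset_iff)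
      have "\<psi> (?\<psi>' (g x)) = g x" if "x \<in> vset \<sigma>" for x
        using gp that by (intro l1) auto
      then show "\<iota> (\<theta> g) = g" unfolding \<iota>_def \<theta>_def using gp
        by (intro extensionalityI[of _ "vset \<sigma>"]) (auto simp: PiE_def)
    qed
    show "\<forall>\<phi>\<in>Fset \<sigma> \<tau> R. \<theta> (\<iota> \<phi>) = \<phi>"
    proof
      fix \<phi> assume "\<phi> \<in> Fset \<sigma> \<tau> R"
      then have pp: "\<phi> \<in> vset \<sigma> \<rightarrow>\<^sub>E vset \<tau>" by (simp add: Fset_def)
      have "?\<psi>' (\<psi> (\<phi> x)) = \<phi> x" if "x \<in> vset \<sigma>" for x
        using pp that by (intro l2) auto
      then show "\<theta> (\<iota> \<phi>) = \<phi>" unfolding \<iota>_def \<theta>_def using pp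
        by (intro extensionalityI[of _ "vset \<sigma>"]) (auto simp: PiE_def)
    qed
    show "\<theta> ` autset \<sigma> \<subseteq> Fset \<sigma> \<tau> R"
    proof
      fix h assume "h \<in> \<theta> ` autset \<sigma>"
      then obtain g where g: "g \<in> autset \<sigma>" "h = \<theta> g" by blast
      have gp: "g \<in> vset \<sigma> \<rightarrow>\<^sub>E vset \<sigma>" and gb: "bij_betw g (vset \<sigma>) (vset \<sigma>)"
        and go: "\<forall>v\<in>vset \<sigma>. \<forall>w\<in>vset \<sigma>. strict_prefix v w \<longleftrightarrow> strict_prefix (g v) (g w)"
        using g(1) by (simp_all add: autset_iff)
      have hv: "h v = ?\<psi>' (g v)" if "v \<in> vset \<sigma>" for v using g(2) that by (simp add: \<theta>_def)
      have "h \<in> vset \<sigma> \<rightarrow>\<^sub>E vset \<tau>"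
        using g(2) gp bij_betwE[OF \<psi>'] by (auto simp: \<theta>_def PiE_def)
      moreover have "bij_betw h (vset \<sigma>) (vset \<tau>)"
      proof -
        have "bij_betw (?\<psi>' \<circ> g) (vset \<sigma>) (vset \<tau>)" using gb \<psi>' by (rule bij_betw_trans)
        then show ?thesis by (rule bij_betw_cong[THEN iffD1, rotated]) (simp add: hv)
      qed
      moreover have "\<forall>v\<in>vset \<sigma>. \<forall>w\<in>vset \<sigma>. (h v, h w) \<in> R \<longleftrightarrow> strict_prefix v w"
      proof (intro ballI)
        fix v w assume v: "v \<in> vset \<sigma>" and w: "w \<in> vset \<sigma>"
        have "g v \<in> vset \<sigma>" "g w \<in> vset \<sigma>" using gb v w by (auto simp: bij_betw_def)
        moreover then have "?\<psi>' (g v) \<in> vset \<tau>" "?\<psi>' (g w) \<in> vset \<tau>" using bij_betwE[OF \<psi>'] by auto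
        ultimately show "(h v, h w) \<in> R \<longleftrightarrow> strict_prefix v w"
          using o go v w by (simp add: hv l1)
      qed
      ultimately show "h \<in> Fset \<sigma> \<tau> R" unfolding Fset_def by blast
    qed
    show "\<iota> ` Fset \<sigma> \<tau> R \<subseteq> autset \<sigma>"
    proof
      fix h assume "h \<in> \<iota> ` Fset \<sigma> \<tau> R"
      then obtain \<phi> where \<phi>: "\<phi> \<in> Fset \<sigma> \<tau> R" "h = \<iota> \<phi>" by blast
      have pp: "\<phi> \<in> vset \<sigma> \<rightarrow>\<^sub>E vset \<tau>" and pb: "bij_betw \<phi> (vset \<sigma>) (vset \<tau>)"
        and po: "\<forall>v\<in>vset \<sigma>. \<forall>w\<in>vset \<sigma>. (\<phi> v, \<phi> w) \<in> R \<longleftrightarrow> strict_prefix v w"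
        using \<phi>(1) unfolding Fset_def by blast+
      have hv: "h v = \<psi> (\<phi> v)" if "v \<in> vset \<sigma>" for v using \<phi>(2) that by (simp add: \<iota>_def)
      have "h \<in> vset \<sigma> \<rightarrow>\<^sub>E vset \<sigma>"
        using \<phi>(2) pp bij_betwE[OF \<psi>] by (auto simp: \<iota>_def PiE_def)
      moreover have "bij_betw h (vset \<sigma>) (vset \<sigma>)"
      proof -
        have "bij_betw (\<psi> \<circ> \<phi>) (vset \<sigma>) (vset \<sigma>)" using pb \<psi> by (rule bij_betw_trans)
        then show ?thesis by (rule bij_betw_cong[THEN iffD1, rotated]) (simp add: hv)
      qed
      moreover have "\<forall>v\<in>vset \<sigma>. \<forall>w\<in>vset \<sigma>. strict_prefix v w \<longleftrightarrow> strict_prefix (h v) (h w)"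
      proof (intro ballI)
        fix v w assume v: "v \<in> vset \<sigma>" and w: "w \<in> vset \<sigma>"
        have "\<phi> v \<in> vset \<tau>" "\<phi> w \<in> vset \<tau>" using bij_betwE[OF pb] v w by auto
        then have "(\<phi> v, \<phi> w) \<in> R \<longleftrightarrow> strict_prefix (\<psi> (\<phi> v)) (\<psi> (\<phi> w))" using o by blast
        moreover have "(\<phi> v, \<phi> w) \<in> R \<longleftrightarrow> strict_prefix v w" using po v w by blast
        ultimately show "strict_prefix v w \<longleftrightarrow> strict_prefix (h v) (h w)"
          using v w by (simp add: hv)
      qed
      ultimately show "h \<in> autset \<sigma>" by (simp add: autset_iff)
    qed
  qed
  then show ?thesis by (metis bij_betw_same_card)
qed

lemma autset_pos: "card (autset s) > 0"
proof -
  have "restrict id (vset s) \<in> autset s"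
    unfolding autset_iff by (auto simp: bij_betw_def inj_on_def PiE_def)
  moreover have "finite (autset s)"
  proof (rule finite_subset)
    show "autset s \<subseteq> vset s \<rightarrow>\<^sub>E vset s" by (auto simp: autset_iff)
    show "finite (vset s \<rightarrow>\<^sub>E vset s)" by (intro finite_PiE vset_finite)
  qed
  ultimately show ?thesis by (auto simp: card_gt_0_iff)
qed

lemma btilde_eq: "btilde \<sigma> \<tau> = count (image_mset forget (Psi \<tau>)) (forget \<sigma>) * symf \<sigma>"
proof -
  let ?I = "{R \<in> Adm \<tau>. isoR \<tau> R \<sigma>}"
  have fin: "finite ?I" using finite_Adm by simp
  have finF: "\<forall>R\<in>?I. finite (Fset \<sigma> \<tau> R)"
  proof
    fix R
    have "Fset \<sigma> \<tau> R \<subseteq> vset \<sigma> \<rightarrow>\<^sub>E vset \<tau>" by (auto simp: Fset_def)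
    then show "finite (Fset \<sigma> \<tau> R)" by (rule finite_subset) (intro finite_PiE vset_finite)
  qed
  have "btilde \<sigma> \<tau> = card (\<Union> (Fset \<sigma> \<tau> ` ?I))" by (simp add: btilde_btset btset_eq)
  also have "\<dots> = (\<Sum>R\<in>?I. card (Fset \<sigma> \<tau> R))"
    by (rule card_UN_disjoint[OF fin finF]) (intro ballI impI Fset_disj; simp)
  also have "\<dots> = (\<Sum>R\<in>?I. symf \<sigma>)" by (intro sum.cong) (auto simp: Fset_card symf_autset)
  also have "\<dots> = card ?I * symf \<sigma>" by simp
  finally show ?thesis by (simp add: count_eq_card)
qed

theorem corollary2p5:
  fixes S :: "utree \<Rightarrow> ptree" and t :: utree
  assumes S_section: "\<And>t. forget (S t) = t"
  shows "\<forall>s \<sigma>. forget \<sigma> = s \<longrightarrow>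
           real (count (image_mset forget (Psi (S t))) s)
             = real (btilde \<sigma> (S t)) / real (symf \<sigma>)"
proof (intro allI impI)
  fix s \<sigma> assume "forget \<sigma> = s"
  moreover have "symf \<sigma> > 0" using autset_pos by (simp add: symf_autset)
  ultimately show "real (count (image_mset forget (Psi (S t))) s) = real (btilde \<sigma> (S t)) / real (symf \<sigma>)"
    by (simp add: btilde_eq)
qed


end
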